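(* In the setting below, $$B_0\ \cong\ \bigoplus_{e\in G_0}\ \bigoplus_{f\in G_0:\ T_e\cap S_f\neq\emptyset}M_{n_{e,f}}(E_e)$$ as unital $K$-algebras, where $n_{e,f}=|T_e\cap S_f|$. Here $B_0$ is a unital subalgebra of $B$ with identity $\sum_{e\in G_0}\sum_{g\in T_e}1_e\delta_e\#v_g$.
   Context: Groupoid conventions. A groupoid is a small category with all morphisms invertible, regarded as the set $G$ of morphisms. For $g\in G$ we have $d(g)=g^{-1}g$ and $r(g)=gg^{-1}$. The product $gh$ is defined iff $d(g)=r(h)$, and then $d(gh)=d(h)$, $r(gh)=r(g)$. $G^2=\{(g,h):d(g)=r(h)\}$, and $G_0$ is the set of identities. For $e\in G_0$: - $G_e=\{g: d(g)=r(g)=e\}$; - $S_e=\{g\in G: d(g)=e\}$; - $T_e=\{g\in G: r(g)=e\}$. Actions. An action of $G$ on a ring $R$ is a pair $\beta=(\{E_g\},\{\beta_g\})$ where each $E_g=E_{r(g)}$ is an ideal of $R$, each $\beta_g:E_{g^{-1}}\to E_g$ is a ring isomorphism, $\beta_e=\mathrm{id}$ for $e\in G_0$, and $\beta_g\beta_h=\beta_{gh}$ on $E_{h^{-1}}$ for $(g,h)\in G^2$. Skew groupoid ring. $R\star_\beta G=\bigoplus_{g\in G}E_g\delta_g$ (the $\delta_g$ are formal symbols), with $(x\delta_g)(y\delta_h)=x\beta_g(y)\delta_{gh}$ if $(g,h)\in G^2$ and $0$ otherwise, for $x\in E_g$, $y\in E_h$. $KG^*$. The free $K$-module with basis $\{v_g\}_{g\in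 G}$, with $v_gv_h=\delta_{g,h}v_g$ and identity $\sum_g v_g$. Weak smash product. For a unital $G$-graded algebra $A=\bigoplus A_g$ (with $A_gA_h\subseteq A_{gh}$ if $(g,h)\in G^2$, and $0$ otherwise), $KG^*$ acts by $v_h\cdot a=a_h$ (the $h$-component). $A\#KG^*=A\otimes_K KG^*$ with $(a\#v_g)(b\#v_h)=a(v_{gh^{-1}}\cdot b)\#v_h$ if $d(g)=d(h)$, and $0$ otherwise. Setting. $K$ is a commutative unital ring and $G$ is a finite groupoid. $R$ is a not necessarily unital $K$-algebra with an action $\beta$ of $G$ (by $K$-linear maps) such that each $E_e$, $e\in G_0$, has an identity element $1_e$; put $1_g:=1_{r(g)}$, the identity of $E_g$. Then $R\star_\beta G$ is a unital $K$-algebra with identity $\sum_{e\in G_0}1_e\delta_e$. It is $G$-graded with $g$-component $E_g\delta_g$, so that $v_k\cdot(a_g\delta_g)=\delta_{k,g}a_g\delta_g$. Let $B=(R\star_\beta G)\#KG^*=\bigoplus_{g,h\in G}E_g\delta_g\#v_h$ and $$B_0=\bigoplus_{g,h\in G:\ d(g)=r(g)=r(h)}E_g\delta_g\#v_h.$$ $M_n(X)$ denotes the $n\times n$ matrix algebra over $X$. *)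

theory Defs
  imports Main
begin

text \<open>A groupoid is given by its set of morphisms G, a product mult (only meaningful on
composable pairs) and an inversion gi.  Domain and range are d(g) = g^-1 g, r(g) = g g^-1.\<close>

definition gd :: "('g \<Rightarrow> 'g \<Rightarrow> 'g) \<Rightarrow> ('g \<Rightarrow> 'g) \<Rightarrow> 'g \<Rightarrow> 'g" where
  "gd mult gi g = mult (gi g) g"

definition gr :: "('g \<Rightarrow> 'g \<Rightarrow> 'g) \<Rightarrow> ('g \<Rightarrow> 'g) \<Rightarrow> 'g \<Rightarrow> 'g" where
  "gr mult gi g = mult g (gi g)"

definition groupoid :: "'g set \<Rightarrow> ('g \<Rightarrow> 'g \<Rightarrow> 'g) \<Rightarrow> ('g \<Rightarrow> 'g) \<Rightarrow> bool" where
  "groupoid G mult gi \<longleftrightarrow>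
     (\<forall>g\<in>G. gi g \<in> G) \<and>
     (\<forall>g\<in>G. gd mult gi (gi g) = gr mult gi g \<and> gr mult gi (gi g) = gd mult gi g) \<and>
     (\<forall>g\<in>G. \<forall>h\<in>G. gd mult gi g = gr mult gi h \<longrightarrow>
         mult g h \<in> G \<and> gd mult gi (mult g h) = gd mult gi h \<and> gr mult gi (mult g h) = gr mult gi g) \<and>
     (\<forall>g\<in>G. \<forall>h\<in>G. \<forall>l\<in>G. gd mult gi g = gr mult gi h \<and> gd mult gi h = gr mult gi l \<longrightarrow>
         mult (mult g h) l = mult g (mult h l)) \<and>
     (\<forall>g\<in>G. mult (gr mult gi g) g = g \<and> mult g (gd mult gi g) = g)"

definition objects :: "'g set \<Rightarrow> ('g \<Rightarrow> 'g \<Rightarrow> 'g) \<Rightarrow> ('g \<Rightarrow> 'g) \<Rightarrow> 'g set" where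
  "objects G mult gi = gd mult gi ` G"

definition Sset :: "'g set \<Rightarrow> ('g \<Rightarrow> 'g \<Rightarrow> 'g) \<Rightarrow> ('g \<Rightarrow> 'g) \<Rightarrow> 'g \<Rightarrow> 'g set" where
  "Sset G mult gi e = {g\<in>G. gd mult gi g = e}"

definition Tset :: "'g set \<Rightarrow> ('g \<Rightarrow> 'g \<Rightarrow> 'g) \<Rightarrow> ('g \<Rightarrow> 'g) \<Rightarrow> 'g \<Rightarrow> 'g set" where
  "Tset G mult gi e = {g\<in>G. gr mult gi g = e}"

text \<open>R is the (not necessarily unital) ring given by the type 'r (class ring is non-unital);
its K-algebra structure is the scalar multiplication smul.\<close>

definition kalgebra :: "('k::comm_ring_1 \<Rightarrow> 'r::ring \<Rightarrow> 'r) \<Rightarrow> bool" where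
  "kalgebra smul \<longleftrightarrow>
     (\<forall>a x y. smul a (x + y) = smul a x + smul a y) \<and>
     (\<forall>a b x. smul (a + b) x = smul a x + smul b x) \<and>
     (\<forall>a b x. smul (a * b) x = smul a (smul b x)) \<and>
     (\<forall>x. smul 1 x = x) \<and>
     (\<forall>a x y. smul a (x * y) = smul a x * y \<and> smul a (x * y) = x * smul a y)"

definition is_ideal :: "'r::ring set \<Rightarrow> bool" where
  "is_ideal I \<longleftrightarrow> 0 \<in> I \<and> (\<forall>x\<in>I. \<forall>y\<in>I. x - y \<in> I) \<and> (\<forall>x\<in>I. \<forall>y. x * y \<in> I \<and> y * x \<in> I)"

definition groupoid_action ::
  "'g set \<Rightarrow> ('g \<Rightarrow> 'g \<Rightarrow> 'g) \<Rightarrow> ('g \<Rightarrow> 'g) \<Rightarrow> ('k::comm_ring_1 \<Rightarrow> 'r::ring \<Rightarrow> 'r)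
     \<Rightarrow> ('g \<Rightarrow> 'r set) \<Rightarrow> ('g \<Rightarrow> 'r \<Rightarrow> 'r) \<Rightarrow> bool" where
  "groupoid_action G mult gi smul E \<beta> \<longleftrightarrow>
     (\<forall>g\<in>G. E g = E (gr mult gi g)) \<and>
     (\<forall>e\<in>objects G mult gi. is_ideal (E e)) \<and>
     (\<forall>g\<in>G. bij_betw (\<beta> g) (E (gi g)) (E g) \<and>
        (\<forall>x\<in>E (gi g). \<forall>y\<in>E (gi g). \<beta> g (x + y) = \<beta> g x + \<beta> g y \<and> \<beta> g (x * y) = \<beta> g x * \<beta> g y) \<and>
        (\<forall>a. \<forall>x\<in>E (gi g). \<beta> g (smul a x) = smul a (\<beta> g x))) \<and>
     (\<forall>e\<in>objects G mult gi. \<forall>x\<in>E e. \<beta> e x = x) \<and>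
     (\<forall>g\<in>G. \<forall>h\<in>G. gd mult gi g = gr mult gi h \<longrightarrow>
        (\<forall>x\<in>E (gi h). \<beta> g (\<beta> h x) = \<beta> (mult g h) x))"

definition local_units :: "'g set \<Rightarrow> ('g \<Rightarrow> 'g \<Rightarrow> 'g) \<Rightarrow> ('g \<Rightarrow> 'g) \<Rightarrow> ('g \<Rightarrow> 'r::ring set) \<Rightarrow> ('g \<Rightarrow> 'r) \<Rightarrow> bool" where
  "local_units G mult gi E one \<longleftrightarrow>
     (\<forall>e\<in>objects G mult gi. one e \<in> E e \<and> (\<forall>x\<in>E e. one e * x = x \<and> x * one e = x))"

text \<open>An element sum_g x_g delta_g of R *_beta G is the function x with x g in E g, zero off G.\<close>
definition skew_carrier :: "'g set \<Rightarrow> ('g \<Rightarrow> 'r::ring set) \<Rightarrow> ('g \<Rightarrow> 'r) set" where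
  "skew_carrier G E = {x. (\<forall>g\<in>G. x g \<in> E g) \<and> (\<forall>g. g \<notin> G \<longrightarrow> x g = 0)}"

definition skew_mult :: "'g set \<Rightarrow> ('g \<Rightarrow> 'g \<Rightarrow> 'g) \<Rightarrow> ('g \<Rightarrow> 'g) \<Rightarrow> ('g \<Rightarrow> 'r::ring \<Rightarrow> 'r)
     \<Rightarrow> ('g \<Rightarrow> 'r) \<Rightarrow> ('g \<Rightarrow> 'r) \<Rightarrow> ('g \<Rightarrow> 'r)" where
  "skew_mult G mult gi \<beta> x y = (\<lambda>m. \<Sum>(g, h)\<in>{(g, h). g \<in> G \<and> h \<in> G \<and> gd mult gi g = gr mult gi h \<and> mult g h = m}.
       x g * \<beta> g (y h))"

text \<open>The action of v_k in KG^* on the graded algebra: projection to the k-component.\<close>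
definition hcomp :: "'g \<Rightarrow> ('g \<Rightarrow> 'r::ring) \<Rightarrow> ('g \<Rightarrow> 'r)" where
  "hcomp k x = (\<lambda>g. if g = k then x g else 0)"

text \<open>An element sum_h a_h # v_h of (R *_beta G) # KG^* (KG^* is free on the v_h) is a function
X with X h the coefficient a_h in R *_beta G; thus X h g is the coefficient of delta_g # v_h.\<close>
definition smash_carrier :: "'g set \<Rightarrow> ('g \<Rightarrow> 'r::ring set) \<Rightarrow> ('g \<Rightarrow> 'g \<Rightarrow> 'r) set" where
  "smash_carrier G E = {X. (\<forall>h\<in>G. X h \<in> skew_carrier G E) \<and> (\<forall>h. h \<notin> G \<longrightarrow> X h = (\<lambda>_. 0))}"

text \<open>(a # v_k)(b # v_l) = a (v_{k l^-1} . b) # v_l if d(k) = d(l), else 0, extended bilinearly.\<close>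
definition smash_mult :: "'g set \<Rightarrow> ('g \<Rightarrow> 'g \<Rightarrow> 'g) \<Rightarrow> ('g \<Rightarrow> 'g) \<Rightarrow> ('g \<Rightarrow> 'r::ring \<Rightarrow> 'r)
     \<Rightarrow> ('g \<Rightarrow> 'g \<Rightarrow> 'r) \<Rightarrow> ('g \<Rightarrow> 'g \<Rightarrow> 'r) \<Rightarrow> ('g \<Rightarrow> 'g \<Rightarrow> 'r)" where
  "smash_mult G mult gi \<beta> X Y = (\<lambda>l m. if l \<in> G then
       (\<Sum>k\<in>{k\<in>G. gd mult gi k = gd mult gi l}.
          skew_mult G mult gi \<beta> (X k) (hcomp (mult k (gi l)) (Y l)) m)
     else 0)"

text \<open>B_0 = sum over d(g) = r(g) = r(h) of E_g delta_g # v_h\<close>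
definition B0_carrier :: "'g set \<Rightarrow> ('g \<Rightarrow> 'g \<Rightarrow> 'g) \<Rightarrow> ('g \<Rightarrow> 'g) \<Rightarrow> ('g \<Rightarrow> 'r::ring set) \<Rightarrow> ('g \<Rightarrow> 'g \<Rightarrow> 'r) set" where
  "B0_carrier G mult gi E = {X\<in>smash_carrier G E. \<forall>h\<in>G. \<forall>g\<in>G. X h g \<noteq> 0 \<longrightarrow>
       gd mult gi g = gr mult gi g \<and> gr mult gi g = gr mult gi h}"

definition B0_one :: "'g set \<Rightarrow> ('g \<Rightarrow> 'g \<Rightarrow> 'g) \<Rightarrow> ('g \<Rightarrow> 'g) \<Rightarrow> ('g \<Rightarrow> 'r::ring) \<Rightarrow> ('g \<Rightarrow> 'g \<Rightarrow> 'r)" where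
  "B0_one G mult gi one = (\<lambda>h g. if h \<in> G \<and> g \<in> objects G mult gi \<and> gr mult gi h = g then one g else 0)"

definition mat_index :: "'g set \<Rightarrow> ('g \<Rightarrow> 'g \<Rightarrow> 'g) \<Rightarrow> ('g \<Rightarrow> 'g) \<Rightarrow> ('g \<times> 'g) set" where
  "mat_index G mult gi = {(e, f). e \<in> objects G mult gi \<and> f \<in> objects G mult gi \<and>
       Tset G mult gi e \<inter> Sset G mult gi f \<noteq> {}}"

definition nsize :: "'g set \<Rightarrow> ('g \<Rightarrow> 'g \<Rightarrow> 'g) \<Rightarrow> ('g \<Rightarrow> 'g) \<Rightarrow> 'g \<Rightarrow> 'g \<Rightarrow> nat" where
  "nsize G mult gi e f = card (Tset G mult gi e \<inter> Sset G mult gi f)"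

text \<open>An element of the direct sum over (e,f) of M_{n_{e,f}}(E_e) is a function M with
M e f the n_{e,f} x n_{e,f} matrix (entries indexed by i, j < n_{e,f}), zero elsewhere.\<close>
definition mat_carrier :: "'g set \<Rightarrow> ('g \<Rightarrow> 'g \<Rightarrow> 'g) \<Rightarrow> ('g \<Rightarrow> 'g) \<Rightarrow> ('g \<Rightarrow> 'r::ring set)
     \<Rightarrow> ('g \<Rightarrow> 'g \<Rightarrow> nat \<Rightarrow> nat \<Rightarrow> 'r) set" where
  "mat_carrier G mult gi E = {M. \<forall>e f i j.
       (if (e, f) \<in> mat_index G mult gi \<and> i < nsize G mult gi e f \<and> j < nsize G mult gi e f
        then M e f i j \<in> E e else M e f i j = 0)}"

definition mat_mult :: "'g set \<Rightarrow> ('g \<Rightarrow> 'g \<Rightarrow> 'g) \<Rightarrow> ('g \<Rightarrow> 'g) \<Rightarrow> ('g \<Rightarrow> 'g \<Rightarrow> nat \<Rightarrow> nat \<Rightarrow> 'r::ring)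
     \<Rightarrow> ('g \<Rightarrow> 'g \<Rightarrow> nat \<Rightarrow> nat \<Rightarrow> 'r) \<Rightarrow> ('g \<Rightarrow> 'g \<Rightarrow> nat \<Rightarrow> nat \<Rightarrow> 'r)" where
  "mat_mult G mult gi M N = (\<lambda>e f i j. \<Sum>k<nsize G mult gi e f. M e f i k * N e f k j)"

definition mat_one :: "'g set \<Rightarrow> ('g \<Rightarrow> 'g \<Rightarrow> 'g) \<Rightarrow> ('g \<Rightarrow> 'g) \<Rightarrow> ('g \<Rightarrow> 'r::ring)
     \<Rightarrow> ('g \<Rightarrow> 'g \<Rightarrow> nat \<Rightarrow> nat \<Rightarrow> 'r)" where
  "mat_one G mult gi one = (\<lambda>e f i j.
       if (e, f) \<in> mat_index G mult gi \<and> i < nsize G mult gi e f \<and> i = j then one e else 0)"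

end

theory Submission
  imports Defs
begin



lemma sum_single:
  assumes "finite A" "a \<in> A" "\<forall>x\<in>A. x \<noteq> a \<longrightarrow> g x = 0"
  shows "sum g A = g a"
proof -
  have "sum g A = g a + sum g (A - {a})" using sum.remove[OF assms(1,2)] by simp
  also have "sum g (A - {a}) = 0" using assms by (intro sum.neutral) auto
  finally show ?thesis by simp
qed

locale GA =
  fixes G :: "'g set" and mult :: "'g \<Rightarrow> 'g \<Rightarrow> 'g" and gi :: "'g \<Rightarrow> 'g"
    and smul :: "'k::comm_ring_1 \<Rightarrow> 'r::ring \<Rightarrow> 'r"
    and E :: "'g \<Rightarrow> 'r set" and \<beta> :: "'g \<Rightarrow> 'r \<Rightarrow> 'r" and one :: "'g \<Rightarrow> 'r"
  assumes fin: "finite G"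
    and grp: "groupoid G mult gi"
    and kal: "kalgebra smul"
    and act: "groupoid_action G mult gi smul E \<beta>"
    and lu: "local_units G mult gi E one"
begin

abbreviation "d \<equiv> gd mult gi"
abbreviation "r \<equiv> gr mult gi"
abbreviation "Obj \<equiv> objects G mult gi"
abbreviation "B0 \<equiv> B0_carrier G mult gi E"

lemma gp: "(\<forall>g\<in>G. gi g \<in> G)"
     "(\<forall>g\<in>G. d (gi g) = r g \<and> r (gi g) = d g)"
     "(\<forall>g\<in>G. \<forall>h\<in>G. d g = r h \<longrightarrow>
         mult g h \<in> G \<and> d (mult g h) = d h \<and> r (mult g h) = r g)"
     "(\<forall>g\<in>G. \<forall>h\<in>G. \<forall>l\<in>G. d g = r h \<and> d h = r l \<longrightarrow>
         mult (mult g h) l = mult g (mult h l))"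
     "(\<forall>g\<in>G. mult (r g) g = g \<and> mult g (d g) = g)"
  using grp unfolding groupoid_def by auto

lemma inv_in[simp]: "g \<in> G \<Longrightarrow> gi g \<in> G" using gp(1) by blast
lemma d_inv[simp]: "g \<in> G \<Longrightarrow> d (gi g) = r g" using gp(2) by blast
lemma r_inv[simp]: "g \<in> G \<Longrightarrow> r (gi g) = d g" using gp(2) by blast
lemma mult_in[simp]: "g \<in> G \<Longrightarrow> h \<in> G \<Longrightarrow> d g = r h \<Longrightarrow> mult g h \<in> G"
  using gp(3) by blast
lemma d_mult[simp]: "g \<in> G \<Longrightarrow> h \<in> G \<Longrightarrow> d g = r h \<Longrightarrow> d (mult g h) = d h"
  using gp(3) by blast
lemma r_mult[simp]: "g \<in> G \<Longrightarrow> h \<in> G \<Longrightarrow> d g = r h \<Longrightarrow> r (mult g h) = r g"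
  using gp(3) by blast
lemma assoc: "g \<in> G \<Longrightarrow> h \<in> G \<Longrightarrow> l \<in> G \<Longrightarrow> d g = r h \<Longrightarrow> d h = r l \<Longrightarrow>
   mult (mult g h) l = mult g (mult h l)"
  using gp(4) by blast
lemma lunit[simp]: "g \<in> G \<Longrightarrow> mult (r g) g = g" using gp(5) by blast
lemma runit[simp]: "g \<in> G \<Longrightarrow> mult g (d g) = g" using gp(5) by blast

lemma d_def': "d g = mult (gi g) g" by (simp add: gd_def)
lemma r_def': "r g = mult g (gi g)" by (simp add: gr_def)

lemma d_in[simp]: "g \<in> G \<Longrightarrow> d g \<in> G"
  unfolding d_def' by simp
lemma r_in[simp]: "g \<in> G \<Longrightarrow> r g \<in> G"
  unfolding r_def' by simp
lemma d_d[simp]: "g \<in> G \<Longrightarrow> d (d g) = d g"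
proof -
  assume g: "g \<in> G"
  have "d (mult (gi g) g) = d g" using g by simp
  thus ?thesis by (simp only: d_def')
qed
lemma r_d[simp]: "g \<in> G \<Longrightarrow> r (d g) = d g"
proof -
  assume g: "g \<in> G"
  have "r (mult (gi g) g) = d g" using g by simp
  thus ?thesis by (simp only: d_def')
qed
lemma r_r[simp]: "g \<in> G \<Longrightarrow> r (r g) = r g"
proof -
  assume g: "g \<in> G"
  have "r (mult g (gi g)) = r g" using g by simp
  thus ?thesis by (simp only: r_def')
qed
lemma d_r[simp]: "g \<in> G \<Longrightarrow> d (r g) = r g"
proof -
  assume g: "g \<in> G"
  have "d (mult g (gi g)) = r g" using g by simp
  thus ?thesis by (simp only: r_def')
qed

lemma obj_iff: "e \<in> Obj \<longleftrightarrow> (\<exists>g\<in>G. e = d g)" unfolding objects_def by blast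
lemma d_obj[simp]: "g \<in> G \<Longrightarrow> d g \<in> Obj" unfolding objects_def by blast
lemma r_obj[simp]: "g \<in> G \<Longrightarrow> r g \<in> Obj"
proof -
  assume g: "g \<in> G"
  have "d (gi g) \<in> Obj" using g d_obj inv_in by blast
  thus ?thesis using g by simp
qed
lemma obj_in: "e \<in> Obj \<Longrightarrow> e \<in> G" unfolding objects_def by auto
lemma obj_d: "e \<in> Obj \<Longrightarrow> d e = e" unfolding objects_def by auto
lemma obj_r: "e \<in> Obj \<Longrightarrow> r e = e" unfolding objects_def by auto

lemma L1: "a \<in> G \<Longrightarrow> b \<in> G \<Longrightarrow> d a = r b \<Longrightarrow> mult (mult a b) (gi b) = a"
proof -
  assume a: "a \<in> G" and b: "b \<in> G" and c: "d a = r b"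
  have "mult (mult a b) (gi b) = mult a (mult b (gi b))" using a b c by (simp add: assoc)
  also have "mult b (gi b) = d a" using c by (simp add: r_def')
  finally show ?thesis using a by simp
qed
lemma L2: "a \<in> G \<Longrightarrow> b \<in> G \<Longrightarrow> d a = d b \<Longrightarrow> mult (mult a (gi b)) b = a"
proof -
  assume a: "a \<in> G" and b: "b \<in> G" and c: "d a = d b"
  have "mult (mult a (gi b)) b = mult a (mult (gi b) b)" using a b c by (simp add: assoc)
  also have "mult (gi b) b = d a" using c by (simp add: d_def')
  finally show ?thesis using a by simp
qed
lemma L3: "a \<in> G \<Longrightarrow> b \<in> G \<Longrightarrow> r a = r b \<Longrightarrow> mult b (mult (gi b) a) = a"
proof -
  assume a: "a \<in> G" and b: "b \<in> G" and c: "r a = r b"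
  have "mult b (mult (gi b) a) = mult (mult b (gi b)) a" using a b c by (simp add: assoc)
  also have "mult b (gi b) = r a" using c by (simp add: r_def')
  finally show ?thesis using a by simp
qed
lemma cancel_r: "a \<in> G \<Longrightarrow> a' \<in> G \<Longrightarrow> b \<in> G \<Longrightarrow> d a = r b \<Longrightarrow> d a' = r b \<Longrightarrow>
   mult a b = mult a' b \<Longrightarrow> a = a'"
  by (metis L1)

end


context GA begin

lemma apc: "(\<forall>g\<in>G. E g = E (r g)) \<and> (\<forall>e\<in>Obj. is_ideal (E e)) \<and>
  (\<forall>g\<in>G. bij_betw (\<beta> g) (E (gi g)) (E g) \<and>
        (\<forall>x\<in>E (gi g). \<forall>y\<in>E (gi g). \<beta> g (x + y) = \<beta> g x + \<beta> g y \<and> \<beta> g (x * y) = \<beta> g x * \<beta> g y) \<and>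
        (\<forall>a. \<forall>x\<in>E (gi g). \<beta> g (smul a x) = smul a (\<beta> g x))) \<and>
  (\<forall>e\<in>Obj. \<forall>x\<in>E e. \<beta> e x = x) \<and>
  (\<forall>g\<in>G. \<forall>h\<in>G. d g = r h \<longrightarrow> (\<forall>x\<in>E (gi h). \<beta> g (\<beta> h x) = \<beta> (mult g h) x))"
  using act unfolding groupoid_action_def .
lemmas ap = apc[THEN conjunct1] apc[THEN conjunct2, THEN conjunct1]
  apc[THEN conjunct2, THEN conjunct2, THEN conjunct1]
  apc[THEN conjunct2, THEN conjunct2, THEN conjunct2, THEN conjunct1]
  apc[THEN conjunct2, THEN conjunct2, THEN conjunct2, THEN conjunct2]

lemma E_r: "g \<in> G \<Longrightarrow> E g = E (r g)" using ap(1) by blast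
lemma E_inv: "g \<in> G \<Longrightarrow> E (gi g) = E (d g)"
  using E_r[of "gi g"] by simp

lemma ideal: "e \<in> Obj \<Longrightarrow> is_ideal (E e)" using ap(2) by blast
lemma zero_E[simp]: "e \<in> Obj \<Longrightarrow> 0 \<in> E e" using ideal unfolding is_ideal_def by blast
lemma diff_E: "e \<in> Obj \<Longrightarrow> x \<in> E e \<Longrightarrow> y \<in> E e \<Longrightarrow> x - y \<in> E e"
  using ideal unfolding is_ideal_def by blast
lemma add_E: "e \<in> Obj \<Longrightarrow> x \<in> E e \<Longrightarrow> y \<in> E e \<Longrightarrow> x + y \<in> E e"
proof -
  assume e: "e \<in> Obj" and x: "x \<in> E e" and y: "y \<in> E e"
  have "0 - y \<in> E e" using diff_E[OF e zero_E[OF e] y] .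
  hence "x - (0 - y) \<in> E e" using diff_E[OF e x] by blast
  thus ?thesis by simp
qed
lemma multl_E: "e \<in> Obj \<Longrightarrow> x \<in> E e \<Longrightarrow> x * y \<in> E e"
  using ideal unfolding is_ideal_def by blast
lemma multr_E: "e \<in> Obj \<Longrightarrow> y \<in> E e \<Longrightarrow> x * y \<in> E e"
  using ideal unfolding is_ideal_def by blast
lemma sum_E: "e \<in> Obj \<Longrightarrow> (\<And>s. s \<in> S \<Longrightarrow> F s \<in> E e) \<Longrightarrow> sum F S \<in> E e"
proof (induction S rule: infinite_finite_induct)
  case (infinite A) thus ?case by simp
next
  case empty thus ?case by simp
next
  case (insert x F) thus ?case by (simp add: add_E)
qed

lemma beta_bij: "g \<in> G \<Longrightarrow> bij_betw (\<beta> g) (E (d g)) (E (r g))"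
  using ap(3) E_inv E_r by metis
lemma beta_mem: "g \<in> G \<Longrightarrow> x \<in> E (d g) \<Longrightarrow> \<beta> g x \<in> E (r g)"
  using beta_bij bij_betwE by blast
lemma beta_add: "g \<in> G \<Longrightarrow> x \<in> E (d g) \<Longrightarrow> y \<in> E (d g) \<Longrightarrow> \<beta> g (x + y) = \<beta> g x + \<beta> g y"
  using ap(3) E_inv by metis
lemma beta_mult: "g \<in> G \<Longrightarrow> x \<in> E (d g) \<Longrightarrow> y \<in> E (d g) \<Longrightarrow> \<beta> g (x * y) = \<beta> g x * \<beta> g y"
  using ap(3) E_inv by metis
lemma beta_smul: "g \<in> G \<Longrightarrow> x \<in> E (d g) \<Longrightarrow> \<beta> g (smul a x) = smul a (\<beta> g x)"
  using ap(3) E_inv by metis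
lemma beta_0[simp]: "g \<in> G \<Longrightarrow> \<beta> g 0 = 0"
proof -
  assume g: "g \<in> G"
  have z: "0 \<in> E (d g)" using g by simp
  have "\<beta> g (0 + 0) = \<beta> g 0 + \<beta> g 0" using beta_add[OF g z z] .
  thus ?thesis by simp
qed
lemma beta_comp: "g \<in> G \<Longrightarrow> h \<in> G \<Longrightarrow> d g = r h \<Longrightarrow> x \<in> E (d h) \<Longrightarrow>
   \<beta> g (\<beta> h x) = \<beta> (mult g h) x"
  using ap(5) E_inv by metis
lemma beta_obj: "e \<in> Obj \<Longrightarrow> x \<in> E e \<Longrightarrow> \<beta> e x = x"
  using ap(4) by blast
lemma beta_sum: "g \<in> G \<Longrightarrow> (\<And>s. s \<in> S \<Longrightarrow> F s \<in> E (d g)) \<Longrightarrow>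
   \<beta> g (sum F S) = (\<Sum>s\<in>S. \<beta> g (F s))"
proof (induction S rule: infinite_finite_induct)
  case (infinite A) thus ?case by simp
next
  case empty thus ?case by simp
next
  case (insert x F) thus ?case by (simp add: beta_add sum_E)
qed
lemma beta_inv1: "u \<in> G \<Longrightarrow> x \<in> E (d u) \<Longrightarrow> \<beta> (gi u) (\<beta> u x) = x"
proof -
  assume u: "u \<in> G" and x: "x \<in> E (d u)"
  have "\<beta> (gi u) (\<beta> u x) = \<beta> (mult (gi u) u) x" using beta_comp[of "gi u" u x] u x by simp
  also have "mult (gi u) u = d u" by (simp add: d_def')
  finally show ?thesis using beta_obj[of "d u" x] u x by simp
qed
lemma beta_inv2: "u \<in> G \<Longrightarrow> y \<in> E (r u) \<Longrightarrow> \<beta> u (\<beta> (gi u) y) = y"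
proof -
  assume u: "u \<in> G" and y: "y \<in> E (r u)"
  have "\<beta> u (\<beta> (gi u) y) = \<beta> (mult u (gi u)) y" using beta_comp[of u "gi u" y] u y by simp
  also have "mult u (gi u) = r u" by (simp add: r_def')
  finally show ?thesis using beta_obj[of "r u" y] u y by simp
qed

lemma one_E: "e \<in> Obj \<Longrightarrow> one e \<in> E e" using lu unfolding local_units_def by blast
lemma one_l: "e \<in> Obj \<Longrightarrow> x \<in> E e \<Longrightarrow> one e * x = x" using lu unfolding local_units_def by blast
lemma one_r: "e \<in> Obj \<Longrightarrow> x \<in> E e \<Longrightarrow> x * one e = x" using lu unfolding local_units_def by blast

lemma beta_one: "g \<in> G \<Longrightarrow> d g = r g \<Longrightarrow> \<beta> g (one (r g)) = one (r g)"
proof -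
  assume g: "g \<in> G" and dr: "d g = r g"
  let ?e = "r g"
  have e: "?e \<in> Obj" using g by simp
  have o: "one ?e \<in> E (d g)" using one_E[OF e] dr by simp
  have "one ?e \<in> E (r g)" using one_E[OF e] by simp
  then obtain x where x: "x \<in> E (d g)" "\<beta> g x = one ?e"
    using beta_bij[OF g] by (metis bij_betw_iff_bijections)
  have b: "\<beta> g (one ?e) \<in> E ?e" using beta_mem[OF g o] .
  have "\<beta> g (one ?e) * one ?e = \<beta> g (one ?e * x)" using beta_mult[OF g o x(1)] x(2) by simp
  also have "one ?e * x = x" using one_l[OF e] x(1) dr by simp
  finally have "\<beta> g (one ?e) * one ?e = one ?e" using x(2) by simp
  thus ?thesis using one_r[OF e b] by simp
qed

lemma kp: "\<forall>a x y. smul a (x * y) = smul a x * y"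
  "\<forall>a x y. smul a (x + y) = smul a x + smul a y"
  using kal unfolding kalgebra_def by auto
lemma smul_0[simp]: "smul a 0 = 0"
proof -
  have "smul a (0 + 0) = smul a 0 + smul a 0" using kp(2) by blast
  thus ?thesis by simp
qed
lemma smul_E: "e \<in> Obj \<Longrightarrow> x \<in> E e \<Longrightarrow> smul a x \<in> E e"
proof -
  assume e: "e \<in> Obj" and x: "x \<in> E e"
  have "smul a x = smul a (one e * x)" using one_l[OF e x] by simp
  also have "\<dots> = smul a (one e) * x" using kp(1) by blast
  finally show ?thesis using multr_E[OF e x] by simp
qed

definition cnd where "cnd l g \<longleftrightarrow> l \<in> G \<and> g \<in> G \<and> d g = r g \<and> r g = r l"

lemma B0_iff: "X \<in> B0 \<longleftrightarrow> (\<forall>l g. if cnd l g then X l g \<in> E (r l) else X l g = 0)"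
proof
  assume X: "X \<in> B0"
  show "\<forall>l g. if cnd l g then X l g \<in> E (r l) else X l g = 0"
  proof (intro allI)
    fix l g
    show "if cnd l g then X l g \<in> E (r l) else X l g = 0"
    proof (cases "l \<in> G")
      case False thus ?thesis using X unfolding B0_carrier_def smash_carrier_def cnd_def by auto
    next
      case l: True
      have sk: "X l \<in> skew_carrier G E" using X l unfolding B0_carrier_def smash_carrier_def by auto
      show ?thesis
      proof (cases "g \<in> G")
        case False thus ?thesis using sk unfolding skew_carrier_def cnd_def by auto
      next
        case g: True
        have m: "X l g \<in> E g" using sk g unfolding skew_carrier_def by auto
        show ?thesis
        proof (cases "cnd l g")
          case True thus ?thesis using m E_r[OF g] unfolding cnd_def by auto
        next
          case False thus ?thesis using X l g unfolding B0_carrier_def cnd_def by auto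
        qed
      qed
    qed
  qed
next
  assume H: "\<forall>l g. if cnd l g then X l g \<in> E (r l) else X l g = 0"
  have z: "\<And>l g. \<not> cnd l g \<Longrightarrow> X l g = 0" using H by metis
  have m: "\<And>l g. cnd l g \<Longrightarrow> X l g \<in> E g"
  proof -
    fix l g assume c: "cnd l g"
    hence "X l g \<in> E (r l)" using H by metis
    thus "X l g \<in> E g" using c E_r[of g] unfolding cnd_def by auto
  qed
  show "X \<in> B0" unfolding B0_carrier_def smash_carrier_def skew_carrier_def
  proof (intro CollectI conjI ballI allI impI)
    fix h g assume h: "h \<in> G" and g: "g \<in> G"
    show "X h g \<in> E g"
    proof (cases "cnd h g")
      case True thus ?thesis using m by blast
    next
      case False thus ?thesis using z g E_r[OF g] by simp
    qed
  next
    fix h g assume "h \<in> G" "g \<notin> G" thus "X h g = 0" using z unfolding cnd_def by blast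
  next
    fix h assume "h \<notin> G" thus "X h = (\<lambda>_. 0)" using z unfolding cnd_def by blast
  next
    fix h g assume "h \<in> G" "g \<in> G" "X h g \<noteq> 0"
    thus "d g = r g" "r g = r h" using z unfolding cnd_def by blast+
  qed
qed

lemma B0_mem: "X \<in> B0 \<Longrightarrow> cnd l g \<Longrightarrow> X l g \<in> E (r l)" using B0_iff by metis
lemma B0_zero: "X \<in> B0 \<Longrightarrow> \<not> cnd l g \<Longrightarrow> X l g = 0" using B0_iff by metis

end


context GA begin

abbreviation "H e f \<equiv> Tset G mult gi e \<inter> Sset G mult gi f"

lemma H_iff: "k \<in> H e f \<longleftrightarrow> k \<in> G \<and> r k = e \<and> d k = f"
  unfolding Tset_def Sset_def by auto

lemma H_fin: "finite (H e f)" using fin unfolding Tset_def by auto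

definition cf where
  "cf X Y l m = (if cnd l m then (\<Sum>k\<in>H (r l) (d l).
      X k (mult (mult m l) (gi k)) * \<beta> (mult (mult m l) (gi k)) (Y l (mult k (gi l)))) else 0)"

lemma key_prod: "m \<in> G \<Longrightarrow> l \<in> G \<Longrightarrow> k \<in> G \<Longrightarrow> d m = r l \<Longrightarrow> d k = d l \<Longrightarrow>
   mult (mult (mult m l) (gi k)) (mult k (gi l)) = m"
proof -
  assume m: "m \<in> G" and l: "l \<in> G" and k: "k \<in> G" and ml: "d m = r l" and kl: "d k = d l"
  let ?x = "mult (mult m l) (gi k)"
  have x: "?x \<in> G" "d ?x = r k" using m l k ml kl by simp_all
  have "mult ?x (mult k (gi l)) = mult (mult ?x k) (gi l)"
    using x k l kl by (simp add: assoc)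
  also have "mult ?x k = mult m l" using L2[of "mult m l" k] m l k ml kl by simp
  also have "mult (mult m l) (gi l) = m" using L1[OF m l ml] .
  finally show ?thesis .
qed

lemma inner:
  assumes X: "X \<in> B0" and Y: "Y \<in> B0" and l: "l \<in> G" and k: "k \<in> G" and kl: "d k = d l"
  shows "skew_mult G mult gi \<beta> (X k) (hcomp (mult k (gi l)) (Y l)) m =
    (if cnd l m \<and> r k = r l then X k (mult (mult m l) (gi k)) * \<beta> (mult (mult m l) (gi k)) (Y l (mult k (gi l))) else 0)"
proof -
  let ?n = "mult k (gi l)"
  let ?P = "{(g, h). g \<in> G \<and> h \<in> G \<and> d g = r h \<and> mult g h = m}"
  let ?F = "\<lambda>(g, h). X k g * \<beta> g (hcomp ?n (Y l) h)"
  have n: "?n \<in> G" "d ?n = r l" "r ?n = r k" using k l kl by simp_all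
  have Pfin: "finite ?P"
  proof (rule finite_subset)
    show "?P \<subseteq> G \<times> G" by auto
    show "finite (G \<times> G)" using fin by simp
  qed
  have zh: "\<And>g h. (g, h) \<in> ?P \<Longrightarrow> h \<noteq> ?n \<Longrightarrow> ?F (g, h) = 0"
    by (simp add: hcomp_def)
  have sm: "skew_mult G mult gi \<beta> (X k) (hcomp ?n (Y l)) m = sum ?F ?P"
    unfolding skew_mult_def by simp
  show ?thesis
  proof (cases "cnd l m \<and> r k = r l")
    case False
    have "\<forall>p\<in>?P. ?F p = 0"
    proof
      fix p assume p: "p \<in> ?P"
      obtain g h where gh: "p = (g, h)" by (cases p)
      have g: "g \<in> G" and h: "h \<in> G" and dgh: "d g = r h" and mgh: "mult g h = m" using p gh by auto
      show "?F p = 0"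
      proof (cases "h = ?n")
        case False thus ?thesis using zh p gh by blast
      next
        case hn: True
        show ?thesis
        proof (cases "Y l ?n = 0")
          case True thus ?thesis using gh hn g by (simp add: hcomp_def)
        next
          case Yn: False
          hence cn: "cnd l ?n" using B0_zero[OF Y] by blast
          show ?thesis
          proof (cases "X k g = 0")
            case True thus ?thesis using gh by simp
          next
            case False
            hence cg: "cnd k g" using B0_zero[OF X] by blast
            have c1: "d ?n = r ?n" "r ?n = r l" using cn unfolding cnd_def by auto
            have c2: "d g = r g" "r g = r k" using cg unfolding cnd_def by auto
            have rk: "r k = r l" using c1(2) n(3) by simp
            have mG: "m \<in> G" using mgh g h dgh by auto
            have rm: "r m = r l" using mgh g h dgh c2(2) rk by auto
            have dm: "d m = r l" using mgh g h dgh hn n(2) by auto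
            have "cnd l m \<and> r k = r l"
              using l mG rm dm rk unfolding cnd_def by simp
            thus ?thesis using \<open>\<not> (cnd l m \<and> r k = r l)\<close> by blast
          qed
        qed
      qed
    qed
    hence "sum ?F ?P = 0" by (rule sum.neutral)
    thus ?thesis using sm by (simp only: if_not_P[OF False])
  next
    case True
    let ?g0 = "mult (mult m l) (gi k)"
    have m: "m \<in> G" "d m = r l" "r m = r l" using True unfolding cnd_def by auto
    have g0: "?g0 \<in> G" "d ?g0 = r k" using m l k kl by simp_all
    have p0: "(?g0, ?n) \<in> ?P" using g0 n key_prod[OF m(1) l k m(2) kl] by simp
    have "sum ?F ?P = ?F (?g0, ?n)"
    proof (rule sum_single[OF Pfin p0], rule ballI, rule impI)
      fix p assume p: "p \<in> ?P" and ne: "p \<noteq> (?g0, ?n)"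
      obtain g h where gh: "p = (g, h)" by (cases p)
      have g: "g \<in> G" and h: "h \<in> G" and dgh: "d g = r h" and mgh: "mult g h = m" using p gh by auto
      show "?F p = 0"
      proof (cases "h = ?n")
        case False thus ?thesis using zh p gh by blast
      next
        case hn: True
        have "g = ?g0"
          using cancel_r[OF g g0(1) n(1)] dgh hn g0 n mgh key_prod[OF m(1) l k m(2) kl] by simp
        thus ?thesis using ne gh hn by simp
      qed
    qed
    thus ?thesis using sm True by (simp add: hcomp_def)
  qed
qed

lemma prod_cf:
  assumes X: "X \<in> B0" and Y: "Y \<in> B0"
  shows "smash_mult G mult gi \<beta> X Y l m = cf X Y l m"
proof (cases "l \<in> G")
  case False thus ?thesis unfolding smash_mult_def cf_def cnd_def by simp
next
  case l: True
  let ?K = "{k \<in> G. d k = d l}"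
  let ?T = "\<lambda>k. X k (mult (mult m l) (gi k)) * \<beta> (mult (mult m l) (gi k)) (Y l (mult k (gi l)))"
  have Kfin: "finite ?K" using fin by simp
  have "smash_mult G mult gi \<beta> X Y l m =
     (\<Sum>k\<in>?K. skew_mult G mult gi \<beta> (X k) (hcomp (mult k (gi l)) (Y l)) m)"
    unfolding smash_mult_def using l by simp
  also have "\<dots> = (\<Sum>k\<in>?K. if cnd l m \<and> r k = r l then ?T k else 0)"
    by (rule sum.cong[OF refl]) (use inner[OF X Y l] in auto)
  also have "\<dots> = (if cnd l m then (\<Sum>k\<in>?K. if r k = r l then ?T k else 0) else 0)"
    by simp
  also have "(\<Sum>k\<in>?K. if r k = r l then ?T k else 0) = sum ?T {k\<in>?K. r k = r l}"
    using sum.inter_filter[OF Kfin, of ?T "\<lambda>k. r k = r l"] by simp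
  also have "{k\<in>?K. r k = r l} = H (r l) (d l)" unfolding Tset_def Sset_def by auto
  finally show ?thesis unfolding cf_def by simp
qed

end


context GA begin

abbreviation "one0 \<equiv> B0_one G mult gi one"
abbreviation "smm \<equiv> smash_mult G mult gi \<beta>"

lemma B0_mem': "X \<in> B0 \<Longrightarrow> k \<in> G \<Longrightarrow> X k g \<in> E (r k)"
  by (cases "cnd k g") (auto simp: B0_mem B0_zero)

lemma zero_B0: "(\<lambda>h g. 0) \<in> B0"
  unfolding B0_iff cnd_def by simp

lemma add_B0: "X \<in> B0 \<Longrightarrow> Y \<in> B0 \<Longrightarrow> (\<lambda>h g. X h g + Y h g) \<in> B0"
  unfolding B0_iff[of "\<lambda>h g. X h g + Y h g"]
proof (intro allI)
  fix l g assume X: "X \<in> B0" and Y: "Y \<in> B0"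
  show "if cnd l g then X l g + Y l g \<in> E (r l) else X l g + Y l g = 0"
  proof (cases "cnd l g")
    case True
    hence "r l \<in> Obj" unfolding cnd_def by simp
    thus ?thesis using True B0_mem[OF X True] B0_mem[OF Y True] add_E by simp
  next
    case False thus ?thesis using B0_zero[OF X False] B0_zero[OF Y False] by simp
  qed
qed

lemma smul_B0: "X \<in> B0 \<Longrightarrow> (\<lambda>h g. smul a (X h g)) \<in> B0"
  unfolding B0_iff[of "\<lambda>h g. smul a (X h g)"]
proof (intro allI)
  fix l g assume X: "X \<in> B0"
  show "if cnd l g then smul a (X l g) \<in> E (r l) else smul a (X l g) = 0"
  proof (cases "cnd l g")
    case True
    hence "r l \<in> Obj" unfolding cnd_def by simp
    thus ?thesis using True B0_mem[OF X True] smul_E by simp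
  next
    case False thus ?thesis using B0_zero[OF X False] by simp
  qed
qed

lemma mult_B0: "X \<in> B0 \<Longrightarrow> Y \<in> B0 \<Longrightarrow> smm X Y \<in> B0"
  unfolding B0_iff[of "smm X Y"]
proof (intro allI)
  fix l m assume X: "X \<in> B0" and Y: "Y \<in> B0"
  show "if cnd l m then smm X Y l m \<in> E (r l) else smm X Y l m = 0"
  proof (cases "cnd l m")
    case True
    hence o: "r l \<in> Obj" unfolding cnd_def by simp
    have "cf X Y l m \<in> E (r l)"
      unfolding cf_def using True
    proof (simp, intro sum_E[OF o])
      fix k assume k: "k \<in> H (r l) (d l)"
      hence "k \<in> G" "r k = r l" by (auto simp: Tset_def Sset_def)
      hence "X k (mult (mult m l) (gi k)) \<in> E (r l)" using B0_mem'[OF X] by metis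
      thus "X k (mult (mult m l) (gi k)) * \<beta> (mult (mult m l) (gi k)) (Y l (mult k (gi l))) \<in> E (r l)"
        using multl_E[OF o] by blast
    qed
    thus ?thesis using True prod_cf[OF X Y] by simp
  next
    case False thus ?thesis using prod_cf[OF X Y] unfolding cf_def by simp
  qed
qed

lemma one_B0: "one0 \<in> B0"
  unfolding B0_iff
proof (intro allI)
  fix l g
  show "if cnd l g then one0 l g \<in> E (r l) else one0 l g = 0"
  proof (cases "cnd l g")
    case True
    hence o: "r l \<in> Obj" unfolding cnd_def by simp
    thus ?thesis using True one_E[OF o] unfolding B0_one_def by auto
  next
    case False
    have "\<not> (l \<in> G \<and> g \<in> Obj \<and> r l = g)"
    proof
      assume a: "l \<in> G \<and> g \<in> Obj \<and> r l = g"
      hence "cnd l g" unfolding cnd_def using obj_in obj_d obj_r by auto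
      thus False using False by blast
    qed
    thus ?thesis using False unfolding B0_one_def by auto
  qed
qed

lemma unit_l: assumes X: "X \<in> B0" shows "smm one0 X = X"
proof (intro ext)
  fix l m
  show "smm one0 X l m = X l m"
  proof (cases "cnd l m")
    case False thus ?thesis using prod_cf[OF one_B0 X] B0_zero[OF X False] unfolding cf_def by simp
  next
    case True
    have l: "l \<in> G" and m: "m \<in> G" "d m = r l" "r m = r l" using True unfolding cnd_def by auto
    let ?k0 = "mult m l"
    let ?T = "\<lambda>k. one0 k (mult (mult m l) (gi k)) * \<beta> (mult (mult m l) (gi k)) (X l (mult k (gi l)))"
    have k0: "?k0 \<in> H (r l) (d l)" using l m by (simp add: Tset_def Sset_def)
    have g00: "mult ?k0 (gi ?k0) = r l" using l m by (simp flip: r_def')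
    have "sum ?T (H (r l) (d l)) = ?T ?k0"
    proof (rule sum_single[OF H_fin k0], intro ballI impI)
      fix k assume k: "k \<in> H (r l) (d l)" and ne: "k \<noteq> ?k0"
      have kk: "k \<in> G" "r k = r l" "d k = d l" using k by (auto simp: Tset_def Sset_def)
      have "r k \<noteq> mult ?k0 (gi k)"
      proof
        assume e: "r k = mult ?k0 (gi k)"
        have "mult (mult ?k0 (gi k)) k = ?k0" using L2[of ?k0 k] kk l m by simp
        hence "mult (r k) k = ?k0" using e by simp
        with lunit[OF kk(1)] ne show False by simp
      qed
      thus "?T k = 0" unfolding B0_one_def by auto
    qed
    also have "?T ?k0 = one (r l) * \<beta> (r l) (X l m)"
      using g00 l m L1[OF m(1) l m(2)] unfolding B0_one_def by simp
    also have "\<dots> = X l m"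
      using beta_obj[of "r l" "X l m"] one_l[of "r l" "X l m"] B0_mem[OF X True] l by simp
    finally show ?thesis using prod_cf[OF one_B0 X] True unfolding cf_def by simp
  qed
qed

lemma unit_r: assumes X: "X \<in> B0" shows "smm X one0 = X"
proof (intro ext)
  fix l m
  show "smm X one0 l m = X l m"
  proof (cases "cnd l m")
    case False thus ?thesis using prod_cf[OF X one_B0] B0_zero[OF X False] unfolding cf_def by simp
  next
    case True
    have l: "l \<in> G" and m: "m \<in> G" "d m = r l" "r m = r l" using True unfolding cnd_def by auto
    let ?T = "\<lambda>k. X k (mult (mult m l) (gi k)) * \<beta> (mult (mult m l) (gi k)) (one0 l (mult k (gi l)))"
    have k0: "l \<in> H (r l) (d l)" using l by (simp add: Tset_def Sset_def)
    have "sum ?T (H (r l) (d l)) = ?T l"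
    proof (rule sum_single[OF H_fin k0], intro ballI impI)
      fix k assume k: "k \<in> H (r l) (d l)" and ne: "k \<noteq> l"
      have kk: "k \<in> G" "r k = r l" "d k = d l" using k by (auto simp: Tset_def Sset_def)
      have "r l \<noteq> mult k (gi l)"
      proof
        assume e: "r l = mult k (gi l)"
        have "mult (mult k (gi l)) l = k" using L2[of k l] kk l by simp
        hence "mult (r l) l = k" using e by simp
        with lunit[OF l] ne show False by simp
      qed
      thus "?T k = 0" using kk l m unfolding B0_one_def by auto
    qed
    also have "?T l = X l m * \<beta> m (one (r l))"
      using l m L1[OF m(1) l m(2)] unfolding B0_one_def by (simp flip: r_def')
    also have "\<beta> m (one (r l)) = one (r l)" using beta_one[OF m(1)] m by simp
    also have "X l m * one (r l) = X l m"
      using one_r[of "r l" "X l m"] B0_mem[OF X True] l by simp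
    finally show ?thesis using prod_cf[OF X one_B0] True unfolding cf_def by simp
  qed
qed

end


context GA begin

abbreviation "N \<equiv> nsize G mult gi"
abbreviation "MI \<equiv> mat_index G mult gi"

definition idx where "idx e f = (SOME h. bij_betw h {0..<N e f} (H e f))"

lemma idx_bij: "bij_betw (idx e f) {0..<N e f} (H e f)"
proof -
  have "\<exists>h. bij_betw h {0..<N e f} (H e f)"
    unfolding nsize_def using ex_bij_betw_nat_finite[OF H_fin] .
  thus ?thesis unfolding idx_def by (rule someI_ex)
qed

lemma idx_in: "i < N e f \<Longrightarrow> idx e f i \<in> H e f"
  using idx_bij bij_betwE by fastforce
lemma idx_G: "i < N e f \<Longrightarrow> idx e f i \<in> G" using idx_in H_iff by blast
lemma idx_r: "i < N e f \<Longrightarrow> r (idx e f i) = e" using idx_in H_iff by blast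
lemma idx_d: "i < N e f \<Longrightarrow> d (idx e f i) = f" using idx_in H_iff by blast
lemma idx_inj: "i < N e f \<Longrightarrow> j < N e f \<Longrightarrow> idx e f i = idx e f j \<Longrightarrow> i = j"
  using idx_bij unfolding bij_betw_def inj_on_def by auto

definition iv where "iv e f a = inv_into {0..<N e f} (idx e f) a"
lemma iv_lt: "a \<in> H e f \<Longrightarrow> iv e f a < N e f"
  unfolding iv_def using idx_bij bij_betw_inv_into bij_betwE by fastforce
lemma idx_iv: "a \<in> H e f \<Longrightarrow> idx e f (iv e f a) = a"
  unfolding iv_def using idx_bij bij_betw_inv_into_right by fastforce
lemma iv_idx: "i < N e f \<Longrightarrow> iv e f (idx e f i) = i"
  unfolding iv_def using idx_bij bij_betw_inv_into_left by fastforce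

lemma MI_iff: "(e, f) \<in> MI \<longleftrightarrow> e \<in> Obj \<and> f \<in> Obj \<and> H e f \<noteq> {}"
  unfolding mat_index_def by simp
lemma MI_pos: "(e, f) \<in> MI \<Longrightarrow> 0 < N e f"
  unfolding MI_iff nsize_def using H_fin card_gt_0_iff by blast

definition u where "u e f i = mult (idx e f 0) (gi (idx e f i))"

lemma u_props: "(e, f) \<in> MI \<Longrightarrow> i < N e f \<Longrightarrow> u e f i \<in> G \<and> d (u e f i) = e \<and> r (u e f i) = e"
proof -
  assume ef: "(e, f) \<in> MI" and i: "i < N e f"
  have z: "0 < N e f" using MI_pos[OF ef] .
  show ?thesis unfolding u_def using idx_G[OF z] idx_G[OF i] idx_d[OF z] idx_d[OF i] idx_r[OF z] idx_r[OF i]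
    by simp
qed

definition phi where
  "phi X = (\<lambda>e f i j. if (e, f) \<in> MI \<and> i < N e f \<and> j < N e f then
     \<beta> (u e f i) (X (idx e f j) (mult (idx e f i) (gi (idx e f j)))) else 0)"

definition psi where
  "psi M = (\<lambda>l g. if cnd l g then
     \<beta> (gi (u (r l) (d l) (iv (r l) (d l) (mult g l)))) (M (r l) (d l) (iv (r l) (d l) (mult g l)) (iv (r l) (d l) l))
     else 0)"

lemma mc_iff: "M \<in> mat_carrier G mult gi E \<longleftrightarrow> (\<forall>e f i j.
       (if (e, f) \<in> MI \<and> i < N e f \<and> j < N e f then M e f i j \<in> E e else M e f i j = 0))"
  unfolding mat_carrier_def by simp

lemma ij_facts:
  assumes ef: "(e, f) \<in> MI" and i: "i < N e f" and j: "j < N e f"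
  shows "cnd (idx e f j) (mult (idx e f i) (gi (idx e f j)))"
    and "r (idx e f j) = e" "d (idx e f j) = f"
    and "mult (mult (idx e f i) (gi (idx e f j))) (idx e f j) = idx e f i"
proof -
  note a = idx_G[OF i] idx_r[OF i] idx_d[OF i]
  note b = idx_G[OF j] idx_r[OF j] idx_d[OF j]
  show "cnd (idx e f j) (mult (idx e f i) (gi (idx e f j)))" unfolding cnd_def using a b by simp
  show "r (idx e f j) = e" "d (idx e f j) = f" using b by simp_all
  show "mult (mult (idx e f i) (gi (idx e f j))) (idx e f j) = idx e f i"
    using L2[of "idx e f i" "idx e f j"] a b by simp
qed

lemma phi_mem: "X \<in> B0 \<Longrightarrow> phi X \<in> mat_carrier G mult gi E"
  unfolding mc_iff
proof (intro allI)
  fix e f i j assume X: "X \<in> B0"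
  show "if (e, f) \<in> MI \<and> i < N e f \<and> j < N e f then phi X e f i j \<in> E e else phi X e f i j = 0"
  proof (cases "(e, f) \<in> MI \<and> i < N e f \<and> j < N e f")
    case True
    hence ef: "(e, f) \<in> MI" and i: "i < N e f" and j: "j < N e f" by auto
    note up = u_props[OF ef i]
    have "X (idx e f j) (mult (idx e f i) (gi (idx e f j))) \<in> E (r (idx e f j))"
      using B0_mem'[OF X idx_G[OF j]] .
    hence "X (idx e f j) (mult (idx e f i) (gi (idx e f j))) \<in> E (d (u e f i))"
      using up idx_r[OF j] by simp
    hence "\<beta> (u e f i) (X (idx e f j) (mult (idx e f i) (gi (idx e f j)))) \<in> E (r (u e f i))"
      using beta_mem up by blast
    thus ?thesis using True up unfolding phi_def by simp
  next
    case False
    have "phi X e f i j = 0" unfolding phi_def using False by auto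
    thus ?thesis by (simp only: if_not_P[OF False])
  qed
qed

lemma cnd_facts:
  assumes c: "cnd l g"
  shows "(r l, d l) \<in> MI" "l \<in> H (r l) (d l)" "mult g l \<in> H (r l) (d l)"
proof -
  have l: "l \<in> G" and g: "g \<in> G" "d g = r g" "r g = r l" using c unfolding cnd_def by auto
  show "l \<in> H (r l) (d l)" using l H_iff by blast
  thus "(r l, d l) \<in> MI" unfolding MI_iff using l by auto
  show "mult g l \<in> H (r l) (d l)" using l g H_iff by simp
qed

lemma psi_mem: "M \<in> mat_carrier G mult gi E \<Longrightarrow> psi M \<in> B0"
  unfolding B0_iff
proof (intro allI)
  fix l g assume M: "M \<in> mat_carrier G mult gi E"
  show "if cnd l g then psi M l g \<in> E (r l) else psi M l g = 0"
  proof (cases "cnd l g")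
    case True
    note cf = cnd_facts[OF True]
    let ?e = "r l" and ?f = "d l"
    let ?i = "iv ?e ?f (mult g l)" and ?j = "iv ?e ?f l"
    have i: "?i < N ?e ?f" using iv_lt[OF cf(3)] .
    have j: "?j < N ?e ?f" using iv_lt[OF cf(2)] .
    have Mm: "M ?e ?f ?i ?j \<in> E ?e" using M cf(1) i j unfolding mc_iff by metis
    note up = u_props[OF cf(1) i]
    have "M ?e ?f ?i ?j \<in> E (d (gi (u ?e ?f ?i)))" using up Mm by simp
    hence "\<beta> (gi (u ?e ?f ?i)) (M ?e ?f ?i ?j) \<in> E (r (gi (u ?e ?f ?i)))"
      using beta_mem[of "gi (u ?e ?f ?i)"] inv_in up by blast
    thus ?thesis using True up unfolding psi_def by simp
  next
    case False
    have "psi M l g = 0" unfolding psi_def using False by auto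
    thus ?thesis by (simp only: if_not_P[OF False])
  qed
qed

lemma psi_phi: assumes X: "X \<in> B0" shows "psi (phi X) = X"
proof (intro ext)
  fix l g
  show "psi (phi X) l g = X l g"
  proof (cases "cnd l g")
    case False thus ?thesis unfolding psi_def using B0_zero[OF X False] by simp
  next
    case True
    note cf = cnd_facts[OF True]
    have l: "l \<in> G" and g: "g \<in> G" "d g = r g" "r g = r l" using True unfolding cnd_def by auto
    let ?e = "r l" and ?f = "d l"
    let ?i = "iv ?e ?f (mult g l)" and ?j = "iv ?e ?f l"
    have i: "?i < N ?e ?f" using iv_lt[OF cf(3)] .
    have j: "?j < N ?e ?f" using iv_lt[OF cf(2)] .
    note up = u_props[OF cf(1) i]
    have e1: "idx ?e ?f ?j = l" using idx_iv[OF cf(2)] .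
    have e2: "idx ?e ?f ?i = mult g l" using idx_iv[OF cf(3)] .
    have e3: "mult (mult g l) (gi l) = g" using L1[of g l] l g by simp
    have "phi X ?e ?f ?i ?j = \<beta> (u ?e ?f ?i) (X l g)"
      unfolding phi_def using cf(1) i j e1 e2 e3 by simp
    moreover have "X l g \<in> E (d (u ?e ?f ?i))" using B0_mem[OF X True] up by simp
    ultimately have "psi (phi X) l g = \<beta> (gi (u ?e ?f ?i)) (\<beta> (u ?e ?f ?i) (X l g))"
      unfolding psi_def using True by simp
    thus ?thesis using beta_inv1 up \<open>X l g \<in> E (d (u ?e ?f ?i))\<close> by simp
  qed
qed

lemma phi_psi: assumes M: "M \<in> mat_carrier G mult gi E" shows "phi (psi M) = M"
proof (intro ext)
  fix e f i j
  show "phi (psi M) e f i j = M e f i j"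
  proof (cases "(e, f) \<in> MI \<and> i < N e f \<and> j < N e f")
    case False thus ?thesis using M unfolding phi_def mc_iff by metis
  next
    case True
    hence ef: "(e, f) \<in> MI" and i: "i < N e f" and j: "j < N e f" by auto
    note ij = ij_facts[OF ef i j]
    let ?l = "idx e f j" and ?g = "mult (idx e f i) (gi (idx e f j))"
    note up = u_props[OF ef i]
    have "psi M ?l ?g = \<beta> (gi (u e f i)) (M e f i j)"
      unfolding psi_def using ij iv_idx[OF i] iv_idx[OF j] by simp
    moreover have "M e f i j \<in> E (r (u e f i))" using M True up unfolding mc_iff by metis
    ultimately have "phi (psi M) e f i j = \<beta> (u e f i) (\<beta> (gi (u e f i)) (M e f i j))"
      unfolding phi_def using True by simp
    thus ?thesis using beta_inv2 up \<open>M e f i j \<in> E (r (u e f i))\<close> by simp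
  qed
qed

lemma phi_add: assumes X: "X \<in> B0" and Y: "Y \<in> B0"
  shows "phi (\<lambda>h g. X h g + Y h g) = (\<lambda>e f i j. phi X e f i j + phi Y e f i j)"
proof (intro ext)
  fix e f i j
  show "phi (\<lambda>h g. X h g + Y h g) e f i j = phi X e f i j + phi Y e f i j"
  proof (cases "(e, f) \<in> MI \<and> i < N e f \<and> j < N e f")
    case False thus ?thesis by (simp only: phi_def if_not_P[OF False]) simp
  next
    case True
    hence ef: "(e, f) \<in> MI" and i: "i < N e f" and j: "j < N e f" by auto
    note up = u_props[OF ef i]
    have x: "X (idx e f j) (mult (idx e f i) (gi (idx e f j))) \<in> E (d (u e f i))"
      using B0_mem'[OF X idx_G[OF j]] up idx_r[OF j] by simp
    have y: "Y (idx e f j) (mult (idx e f i) (gi (idx e f j))) \<in> E (d (u e f i))"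
      using B0_mem'[OF Y idx_G[OF j]] up idx_r[OF j] by simp
    show ?thesis unfolding phi_def using True beta_add[OF _ x y] up by simp
  qed
qed

lemma phi_smul: assumes X: "X \<in> B0"
  shows "phi (\<lambda>h g. smul a (X h g)) = (\<lambda>e f i j. smul a (phi X e f i j))"
proof (intro ext)
  fix e f i j
  show "phi (\<lambda>h g. smul a (X h g)) e f i j = smul a (phi X e f i j)"
  proof (cases "(e, f) \<in> MI \<and> i < N e f \<and> j < N e f")
    case False thus ?thesis by (simp only: phi_def if_not_P[OF False]) simp
  next
    case True
    hence ef: "(e, f) \<in> MI" and i: "i < N e f" and j: "j < N e f" by auto
    note up = u_props[OF ef i]
    have x: "X (idx e f j) (mult (idx e f i) (gi (idx e f j))) \<in> E (d (u e f i))"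
      using B0_mem'[OF X idx_G[OF j]] up idx_r[OF j] by simp
    show ?thesis unfolding phi_def using True beta_smul[OF _ x] up by simp
  qed
qed

lemma phi_one: "phi one0 = mat_one G mult gi one"
proof (intro ext)
  fix e f i j
  show "phi one0 e f i j = mat_one G mult gi one e f i j"
  proof (cases "(e, f) \<in> MI \<and> i < N e f \<and> j < N e f")
    case False thus ?thesis unfolding phi_def mat_one_def by auto
  next
    case True
    hence ef: "(e, f) \<in> MI" and i: "i < N e f" and j: "j < N e f" by auto
    note up = u_props[OF ef i]
    note ij = ij_facts[OF ef i j]
    show ?thesis
    proof (cases "i = j")
      case True
      have "mult (idx e f j) (gi (idx e f j)) = e" using idx_r[OF j] by (simp flip: r_def')
      moreover have "e \<in> Obj" using ef MI_iff by blast
      moreover have "\<beta> (u e f i) (one e) = one e" using beta_one[of "u e f i"] up by simp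
      ultimately show ?thesis unfolding phi_def mat_one_def B0_one_def
        using \<open>(e, f) \<in> MI \<and> i < N e f \<and> j < N e f\<close> True idx_G[OF j] idx_r[OF j] by simp
    next
      case False
      have "r (idx e f j) \<noteq> mult (idx e f i) (gi (idx e f j))"
      proof
        assume a: "r (idx e f j) = mult (idx e f i) (gi (idx e f j))"
        have "mult (r (idx e f j)) (idx e f j) = idx e f i" using ij(4) a by simp
        hence "idx e f j = idx e f i" using lunit[OF idx_G[OF j]] by simp
        thus False using idx_inj[OF i j] False by simp
      qed
      hence "one0 (idx e f j) (mult (idx e f i) (gi (idx e f j))) = 0" unfolding B0_one_def by auto
      thus ?thesis unfolding phi_def mat_one_def using False up by simp
    qed
  qed
qed

end


context GA begin

lemma u_comp: "h0 \<in> H e f \<Longrightarrow> a \<in> H e f \<Longrightarrow> k \<in> H e f \<Longrightarrow>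
   mult (mult h0 (gi a)) (mult a (gi k)) = mult h0 (gi k)"
proof -
  assume h: "h0 \<in> H e f" and a: "a \<in> H e f" and k: "k \<in> H e f"
  have h': "h0 \<in> G" "d h0 = f" "r h0 = e" using h H_iff by auto
  have a': "a \<in> G" "d a = f" "r a = e" using a H_iff by auto
  have k': "k \<in> G" "d k = f" "r k = e" using k H_iff by auto
  let ?x = "mult h0 (gi a)"
  have x: "?x \<in> G" "d ?x = e" using h' a' by simp_all
  have "mult ?x (mult a (gi k)) = mult (mult ?x a) (gi k)"
    using x a' k' by (simp add: assoc)
  also have "mult ?x a = h0" using L2[of h0 a] h' a' by simp
  finally show ?thesis .
qed

lemma phi_mult: assumes X: "X \<in> B0" and Y: "Y \<in> B0"
  shows "phi (smm X Y) = mat_mult G mult gi (phi X) (phi Y)"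
proof (intro ext)
  fix e f i j
  show "phi (smm X Y) e f i j = mat_mult G mult gi (phi X) (phi Y) e f i j"
  proof (cases "(e, f) \<in> MI \<and> i < N e f \<and> j < N e f")
    case False
    have "\<forall>k\<in>{..<N e f}. phi X e f i k * phi Y e f k j = 0"
    proof
      fix k assume k: "k \<in> {..<N e f}"
      show "phi X e f i k * phi Y e f k j = 0"
      proof (cases "(e, f) \<in> MI \<and> i < N e f")
        case True
        hence "\<not> j < N e f" using False by blast
        hence "phi Y e f k j = 0" unfolding phi_def by simp
        thus ?thesis by simp
      next
        case F2: False
        hence "phi X e f i k = 0" unfolding phi_def by auto
        thus ?thesis by simp
      qed
    qed
    hence "mat_mult G mult gi (phi X) (phi Y) e f i j = 0"
      unfolding mat_mult_def by simp
    moreover have "phi (smm X Y) e f i j = 0" by (simp only: phi_def if_not_P[OF False])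
    ultimately show ?thesis by simp
  next
    case True
    hence ef: "(e, f) \<in> MI" and i: "i < N e f" and j: "j < N e f" by auto
    have z: "0 < N e f" using MI_pos[OF ef] .
    note ij = ij_facts[OF ef i j]
    note up = u_props[OF ef i]
    let ?l = "idx e f j" and ?a = "idx e f i" and ?h0 = "idx e f 0"
    let ?m = "mult ?a (gi ?l)"
    let ?ui = "u e f i"
    have a: "?a \<in> G" "d ?a = f" "r ?a = e" using idx_G[OF i] idx_d[OF i] idx_r[OF i] by auto
    have l: "?l \<in> G" "d ?l = f" "r ?l = e" using idx_G[OF j] idx_d[OF j] idx_r[OF j] by auto
    let ?T = "\<lambda>k. X k (mult ?a (gi k)) * \<beta> (mult ?a (gi k)) (Y ?l (mult k (gi ?l)))"
    let ?S = "\<lambda>k. \<beta> ?ui (X k (mult ?a (gi k))) * \<beta> (mult ?h0 (gi k)) (Y ?l (mult k (gi ?l)))"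
    have Tmem: "\<And>k. k \<in> H e f \<Longrightarrow> X k (mult ?a (gi k)) \<in> E (d ?ui) \<and>
        \<beta> (mult ?a (gi k)) (Y ?l (mult k (gi ?l))) \<in> E (d ?ui) \<and>
        Y ?l (mult k (gi ?l)) \<in> E (d (mult ?a (gi k)))"
    proof -
      fix k assume k: "k \<in> H e f"
      have k': "k \<in> G" "d k = f" "r k = e" using k H_iff by auto
      have g: "mult ?a (gi k) \<in> G" "d (mult ?a (gi k)) = e" "r (mult ?a (gi k)) = e"
        using a k' by simp_all
      have y: "Y ?l (mult k (gi ?l)) \<in> E e" using B0_mem'[OF Y l(1)] l by simp
      have "\<beta> (mult ?a (gi k)) (Y ?l (mult k (gi ?l))) \<in> E (r (mult ?a (gi k)))"
        using beta_mem[OF g(1)] y g by simp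
      thus "X k (mult ?a (gi k)) \<in> E (d ?ui) \<and>
        \<beta> (mult ?a (gi k)) (Y ?l (mult k (gi ?l))) \<in> E (d ?ui) \<and>
        Y ?l (mult k (gi ?l)) \<in> E (d (mult ?a (gi k)))"
        using B0_mem'[OF X k'(1)] k' up g y by simp
    qed
    have "phi (smm X Y) e f i j = \<beta> ?ui (smm X Y ?l ?m)"
      unfolding phi_def using True by simp
    also have "smm X Y ?l ?m = sum ?T (H e f)"
      using prod_cf[OF X Y] ij(1) ij(4) l unfolding cf_def by simp
    also have "\<beta> ?ui (sum ?T (H e f)) = (\<Sum>k\<in>H e f. \<beta> ?ui (?T k))"
    proof (rule beta_sum)
      show "?ui \<in> G" using up by simp
      fix k assume k: "k \<in> H e f"
      have "e \<in> Obj" using ef MI_iff by blast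
      thus "?T k \<in> E (d ?ui)" using Tmem[OF k] multl_E up by simp
    qed
    also have "\<dots> = sum ?S (H e f)"
    proof (rule sum.cong[OF refl])
      fix k assume k: "k \<in> H e f"
      have k': "k \<in> G" "d k = f" "r k = e" using k H_iff by auto
      note tm = Tmem[OF k]
      have g: "mult ?a (gi k) \<in> G" "r (mult ?a (gi k)) = e" using a k' by simp_all
      have "\<beta> ?ui (?T k) = \<beta> ?ui (X k (mult ?a (gi k))) * \<beta> ?ui (\<beta> (mult ?a (gi k)) (Y ?l (mult k (gi ?l))))"
        using beta_mult up tm by blast
      also have "\<beta> ?ui (\<beta> (mult ?a (gi k)) (Y ?l (mult k (gi ?l)))) =
          \<beta> (mult ?ui (mult ?a (gi k))) (Y ?l (mult k (gi ?l)))"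
        using beta_comp[of ?ui "mult ?a (gi k)"] up g tm by simp
      also have "mult ?ui (mult ?a (gi k)) = mult ?h0 (gi k)"
        unfolding u_def using u_comp[OF idx_in[OF z] idx_in[OF i] k] .
      finally show "\<beta> ?ui (?T k) = ?S k" .
    qed
    also have "sum ?S (H e f) = (\<Sum>k\<in>{0..<N e f}. ?S (idx e f k))"
      using sum.reindex_bij_betw[OF idx_bij, of ?S] by simp
    also have "\<dots> = mat_mult G mult gi (phi X) (phi Y) e f i j"
      unfolding mat_mult_def phi_def u_def using ef i j by (simp add: atLeast0LessThan)
    finally show ?thesis .
  qed
qed

end

theorem theorem3p7:
  fixes G :: "'g set" and mult :: "'g \<Rightarrow> 'g \<Rightarrow> 'g" and gi :: "'g \<Rightarrow> 'g"
    and smul :: "'k::comm_ring_1 \<Rightarrow> 'r::ring \<Rightarrow> 'r"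
    and E :: "'g \<Rightarrow> 'r set" and \<beta> :: "'g \<Rightarrow> 'r \<Rightarrow> 'r" and one :: "'g \<Rightarrow> 'r"
  assumes "finite G"
    and "groupoid G mult gi"
    and "kalgebra smul"
    and "groupoid_action G mult gi smul E \<beta>"
    and "local_units G mult gi E one"
  shows
    "(B0_carrier G mult gi E \<subseteq> smash_carrier G E \<and>
      (\<lambda>h g. 0) \<in> B0_carrier G mult gi E \<and>
      (\<forall>X\<in>B0_carrier G mult gi E. \<forall>Y\<in>B0_carrier G mult gi E.
          (\<lambda>h g. X h g + Y h g) \<in> B0_carrier G mult gi E \<and>
          smash_mult G mult gi \<beta> X Y \<in> B0_carrier G mult gi E) \<and>
      (\<forall>a. \<forall>X\<in>B0_carrier G mult gi E. (\<lambda>h g. smul a (X h g)) \<in> B0_carrier G mult gi E) \<and>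
      B0_one G mult gi one \<in> B0_carrier G mult gi E \<and>
      (\<forall>X\<in>B0_carrier G mult gi E.
          smash_mult G mult gi \<beta> (B0_one G mult gi one) X = X \<and>
          smash_mult G mult gi \<beta> X (B0_one G mult gi one) = X))
     \<and>
     (\<exists>\<phi>. bij_betw \<phi> (B0_carrier G mult gi E) (mat_carrier G mult gi E) \<and>
        (\<forall>X\<in>B0_carrier G mult gi E. \<forall>Y\<in>B0_carrier G mult gi E.
           \<phi> (\<lambda>h g. X h g + Y h g) = (\<lambda>e f i j. \<phi> X e f i j + \<phi> Y e f i j) \<and>
           \<phi> (smash_mult G mult gi \<beta> X Y) = mat_mult G mult gi (\<phi> X) (\<phi> Y)) \<and>
        (\<forall>a. \<forall>X\<in>B0_carrier G mult gi E. \<phi> (\<lambda>h g. smul a (X h g)) = (\<lambda>e f i j. smul a (\<phi> X e f i j))) \<and>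
        \<phi> (B0_one G mult gi one) = mat_one G mult gi one)"
proof -
  interpret L: GA G mult gi smul E \<beta> one using assms by unfold_locales
  have bij: "bij_betw L.phi (B0_carrier G mult gi E) (mat_carrier G mult gi E)"
  proof (rule bij_betw_byWitness[where f' = L.psi])
    show "\<forall>a\<in>B0_carrier G mult gi E. L.psi (L.phi a) = a" using L.psi_phi by blast
    show "\<forall>a'\<in>mat_carrier G mult gi E. L.phi (L.psi a') = a'" using L.phi_psi by blast
    show "L.phi ` B0_carrier G mult gi E \<subseteq> mat_carrier G mult gi E" using L.phi_mem by blast
    show "L.psi ` mat_carrier G mult gi E \<subseteq> B0_carrier G mult gi E" using L.psi_mem by blast
  qed
  show ?thesis
  proof (intro conjI)
    show "B0_carrier G mult gi E \<subseteq> smash_carrier G E" unfolding B0_carrier_def by blast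
    show "(\<lambda>h g. 0) \<in> B0_carrier G mult gi E" by (rule L.zero_B0)
    show "\<forall>X\<in>B0_carrier G mult gi E. \<forall>Y\<in>B0_carrier G mult gi E.
          (\<lambda>h g. X h g + Y h g) \<in> B0_carrier G mult gi E \<and>
          smash_mult G mult gi \<beta> X Y \<in> B0_carrier G mult gi E"
      using L.add_B0 L.mult_B0 by blast
    show "\<forall>a. \<forall>X\<in>B0_carrier G mult gi E. (\<lambda>h g. smul a (X h g)) \<in> B0_carrier G mult gi E"
      using L.smul_B0 by blast
    show "B0_one G mult gi one \<in> B0_carrier G mult gi E" by (rule L.one_B0)
    show "\<forall>X\<in>B0_carrier G mult gi E.
          smash_mult G mult gi \<beta> (B0_one G mult gi one) X = X \<and>
          smash_mult G mult gi \<beta> X (B0_one G mult gi one) = X"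
      using L.unit_l L.unit_r by blast
    show "\<exists>\<phi>. bij_betw \<phi> (B0_carrier G mult gi E) (mat_carrier G mult gi E) \<and>
        (\<forall>X\<in>B0_carrier G mult gi E. \<forall>Y\<in>B0_carrier G mult gi E.
           \<phi> (\<lambda>h g. X h g + Y h g) = (\<lambda>e f i j. \<phi> X e f i j + \<phi> Y e f i j) \<and>
           \<phi> (smash_mult G mult gi \<beta> X Y) = mat_mult G mult gi (\<phi> X) (\<phi> Y)) \<and>
        (\<forall>a. \<forall>X\<in>B0_carrier G mult gi E. \<phi> (\<lambda>h g. smul a (X h g)) = (\<lambda>e f i j. smul a (\<phi> X e f i j))) \<and>
        \<phi> (B0_one G mult gi one) = mat_one G mult gi one"
      using bij L.phi_add L.phi_mult L.phi_smul L.phi_one by blast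
  qed
qed



end
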